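(* Let $d>1$ be an integer, let $E,F$ be non-isogenous complex elliptic curves, and let $P\in E[d]$ and $Q\in F[d]$ be points of order exactly $d$. Assume that $E/\langle P\rangle$ is not isomorphic to $E$ or that $F/\langle Q\rangle$ is not isomorphic to $F$. Then the abelian surface $A=(E\times F)/\langle (P,Q)\rangle$, endowed with the polarisation of type $(1,d)$ descending from the product polarisation $\mathcal O_E(d\cdot 0)\boxtimes\mathcal O_F(d\cdot 0)$, is not isomorphic (as an abstract abelian variety) to its dual abelian surface $\hat A$.
   Context: $\hat A=\mathrm{Pic}^0(A)$ denotes the dual abelian variety. *)

theory Defs
  imports Complex_Main
begin

text \<open>Complex elliptic curves are modelled analytically as complex tori C/L,
L = Z w1 + Z w2 a lattice; abelian surfaces as C^2/Lambda (C^2 = complex * complex).\<close>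

definition lat :: "complex \<Rightarrow> complex \<Rightarrow> complex set" where
  "lat w1 w2 = {of_int m * w1 + of_int n * w2 | m n. True}"

definition period_pair :: "complex \<Rightarrow> complex \<Rightarrow> bool" where
  "period_pair w1 w2 \<longleftrightarrow> w1 \<noteq> 0 \<and> Im (w2 / w1) \<noteq> 0"

text \<open>C/L1 and C/L2 are isogenous iff some nonzero alpha satisfies alpha L1 \<subseteq> L2.\<close>
definition isogenous_lat :: "complex set \<Rightarrow> complex set \<Rightarrow> bool" where
  "isogenous_lat L1 L2 \<longleftrightarrow> (\<exists>\<alpha>. \<alpha> \<noteq> 0 \<and> (\<lambda>z. \<alpha> * z) ` L1 \<subseteq> L2)"

definition iso_lat :: "complex set \<Rightarrow> complex set \<Rightarrow> bool" where
  "iso_lat L1 L2 \<longleftrightarrow> (\<exists>\<alpha>. \<alpha> \<noteq> 0 \<and> (\<lambda>z. \<alpha> * z) ` L1 = L2)"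

definition exact_order :: "complex set \<Rightarrow> nat \<Rightarrow> complex \<Rightarrow> bool" where
  "exact_order L d p \<longleftrightarrow> of_nat d * p \<in> L \<and> (\<forall>k. 0 < k \<and> k < d \<longrightarrow> of_nat k * p \<notin> L)"

definition quot_lat :: "complex set \<Rightarrow> complex \<Rightarrow> complex set" where
  "quot_lat L p = {l + of_int k * p | l k. l \<in> L}"

definition prod_quot_lat :: "complex set \<Rightarrow> complex set \<Rightarrow> complex \<Rightarrow> complex \<Rightarrow> (complex \<times> complex) set" where
  "prod_quot_lat L1 L2 p q = {(l1 + of_int k * p, l2 + of_int k * q) | l1 l2 k. l1 \<in> L1 \<and> l2 \<in> L2}"

text \<open>Dual torus: the dual of V/Lambda is Hom_antilinear(V,C)/Lambda^*, with
 Lambda^* = {l. Im (l Lambda) \<subseteq> Z}. Antilinear forms on C^2 are l(z) = a1 cnj z1 + a2 cnj z2,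
 identified C-linearly with (a1,a2).\<close>
definition dual_lat :: "(complex \<times> complex) set \<Rightarrow> (complex \<times> complex) set" where
  "dual_lat \<Lambda> = {(a1, a2). \<forall>(z1, z2) \<in> \<Lambda>. Im (a1 * cnj z1 + a2 * cnj z2) \<in> \<int>}"

text \<open>Complex tori C^2/Lambda1 and C^2/Lambda2 are isomorphic iff an invertible
 C-linear map sends Lambda1 onto Lambda2.\<close>
definition iso_tori2 :: "(complex \<times> complex) set \<Rightarrow> (complex \<times> complex) set \<Rightarrow> bool" where
  "iso_tori2 \<Lambda>1 \<Lambda>2 \<longleftrightarrow> (\<exists>a b c e. a * e - b * c \<noteq> 0 \<and>
      (\<lambda>(z1, z2). (a * z1 + b * z2, c * z1 + e * z2)) ` \<Lambda>1 = \<Lambda>2)"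

end

theory Submission
  imports Defs
begin

definition dual1 :: "complex set \<Rightarrow> complex set" where
  "dual1 S = {x. \<forall>z\<in>S. Im (x * cnj z) \<in> \<int>}"

lemma lat_memI: "of_int m * w1 + of_int n * w2 \<in> lat w1 w2"
  unfolding lat_def by blast

lemma lat_w1: "w1 \<in> lat w1 w2" using lat_memI[of 1 w1 0 w2] by simp
lemma lat_w2: "w2 \<in> lat w1 w2" using lat_memI[of 0 w1 1 w2] by simp

lemma lat_add: "z \<in> lat w1 w2 \<Longrightarrow> y \<in> lat w1 w2 \<Longrightarrow> z + y \<in> lat w1 w2"
proof -
  assume "z \<in> lat w1 w2" "y \<in> lat w1 w2"
  then obtain m n m' n' where "z = of_int m * w1 + of_int n * w2" "y = of_int m' * w1 + of_int n' * w2"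
    unfolding lat_def by blast
  then have "z + y = of_int (m+m') * w1 + of_int (n+n') * w2" by (simp add: algebra_simps)
  then show ?thesis using lat_memI by metis
qed

lemma lat_intmul: "z \<in> lat w1 w2 \<Longrightarrow> of_int k * z \<in> lat w1 w2"
proof -
  assume "z \<in> lat w1 w2"
  then obtain m n where "z = of_int m * w1 + of_int n * w2"
    unfolding lat_def by blast
  then have "of_int k * z = of_int (k*m) * w1 + of_int (k*n) * w2" by (simp add: algebra_simps)
  then show ?thesis using lat_memI by metis
qed

lemma lat_zero: "0 \<in> lat w1 w2" using lat_memI[of 0 w1 0 w2] by simp

lemma lat_diff: "z \<in> lat w1 w2 \<Longrightarrow> y \<in> lat w1 w2 \<Longrightarrow> z - y \<in> lat w1 w2"
  using lat_add[of z w1 w2 "of_int (-1) * y"] lat_intmul[of y w1 w2 "-1"] by simp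

lemma D_nz: "period_pair w1 w2 \<Longrightarrow> Im (w2 * cnj w1) \<noteq> 0"
  unfolding period_pair_def by (simp add: Im_divide)

lemma Im_c1: assumes "Im (w2 * cnj w1) \<noteq> 0"
  shows "Im ((of_int r * w1 + of_int s * w2) / of_real (Im (w2 * cnj w1)) * cnj w1) = of_int s"
proof -
  define D where "D = Im (w2 * cnj w1)"
  have z: "Im (w1 * cnj w1) = 0" by (simp add: algebra_simps)
  have "(of_int r * w1 + of_int s * w2) / of_real D * cnj w1
      = (of_int r * (w1 * cnj w1) + of_int s * (w2 * cnj w1)) / of_real D"
    by (simp add: algebra_simps)
  also have "Im \<dots> = (of_int r * Im (w1 * cnj w1) + of_int s * D) / D"
    by (simp add: Im_divide_of_real D_def)
  also have "\<dots> = of_int s" using assms unfolding z D_def[symmetric] by simp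
  finally show ?thesis unfolding D_def .
qed

lemma Im_c2: assumes "Im (w2 * cnj w1) \<noteq> 0"
  shows "Im ((of_int r * w1 + of_int s * w2) / of_real (Im (w2 * cnj w1)) * cnj w2) = - of_int r"
proof -
  define D where "D = Im (w2 * cnj w1)"
  have z: "Im (w2 * cnj w2) = 0" by (simp add: algebra_simps)
  have z2: "Im (w1 * cnj w2) = - D" unfolding D_def by (simp add: algebra_simps)
  have "(of_int r * w1 + of_int s * w2) / of_real D * cnj w2
      = (of_int r * (w1 * cnj w2) + of_int s * (w2 * cnj w2)) / of_real D"
    by (simp add: algebra_simps)
  also have "Im \<dots> = (of_int r * Im (w1 * cnj w2) + of_int s * Im (w2 * cnj w2)) / D"
    by (simp add: Im_divide_of_real)
  also have "\<dots> = - of_int r" using assms unfolding z z2 D_def[symmetric] by simp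
  finally show ?thesis unfolding D_def .
qed

lemma Im_lin: "Im (x * cnj (of_int m * w1 + of_int n * w2)) = of_int m * Im (x * cnj w1) + of_int n * Im (x * cnj w2)"
  by (simp add: algebra_simps)

lemma ident: "x * of_real (Im (w2 * cnj w1)) = - of_real (Im (x * cnj w2)) * w1 + of_real (Im (x * cnj w1)) * w2"
  by (simp add: complex_eq_iff algebra_simps)

lemma dual_lat_char:
  assumes "period_pair w1 w2"
  shows "x \<in> dual1 (lat w1 w2) \<longleftrightarrow>
    (\<exists>r s::int. x = (of_int r * w1 + of_int s * w2) / of_real (Im (w2 * cnj w1)))"
proof
  have D: "Im (w2 * cnj w1) \<noteq> 0" using D_nz[OF assms] .
  assume "x \<in> dual1 (lat w1 w2)"
  then have "Im (x * cnj w1) \<in> \<int>" "Im (x * cnj w2) \<in> \<int>"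
    unfolding dual1_def using lat_w1 lat_w2 by blast+
  then obtain s t where st: "Im (x * cnj w1) = of_int s" "Im (x * cnj w2) = of_int t"
    by (metis Ints_cases)
  have e: "x * of_real (Im (w2 * cnj w1)) = - of_real (of_int t) * w1 + of_real (of_int s) * w2"
    using ident[of x w2 w1] unfolding st .
  have "x * of_real (Im (w2 * cnj w1)) = of_int (-t) * w1 + of_int s * w2"
    unfolding e by simp
  then have "x = (of_int (-t) * w1 + of_int s * w2) / of_real (Im (w2 * cnj w1))"
    using D by (metis eq_divide_imp of_real_eq_0_iff)
  then show "\<exists>r s::int. x = (of_int r * w1 + of_int s * w2) / of_real (Im (w2 * cnj w1))" by blast
next
  have D: "Im (w2 * cnj w1) \<noteq> 0" using D_nz[OF assms] .
  assume "\<exists>r s::int. x = (of_int r * w1 + of_int s * w2) / of_real (Im (w2 * cnj w1))"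
  then obtain r s where x: "x = (of_int r * w1 + of_int s * w2) / of_real (Im (w2 * cnj w1))" by blast
  show "x \<in> dual1 (lat w1 w2)" unfolding dual1_def
  proof safe
    fix z assume "z \<in> lat w1 w2"
    then obtain m n where z: "z = of_int m * w1 + of_int n * w2" unfolding lat_def by blast
    have "Im (x * cnj z) = of_int m * of_int s + of_int n * (- of_int r)"
      unfolding z Im_lin unfolding x Im_c1[OF D] Im_c2[OF D] ..
    also have "\<dots> \<in> \<int>" by simp
    finally show "Im (x * cnj z) \<in> \<int>" .
  qed
qed

lemma isog_sym:
  assumes pw: "period_pair w1 w2" and pv: "period_pair v1 v2" and b: "\<beta> \<noteq> 0"
    and sub: "\<And>l. l \<in> lat v1 v2 \<Longrightarrow> \<beta> * l \<in> lat w1 w2"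
  shows "isogenous_lat (lat w1 w2) (lat v1 v2)"
proof -
  define D1 where "D1 = Im (w2 * cnj w1)"
  define D2 where "D2 = Im (v2 * cnj v1)"
  have D1: "D1 \<noteq> 0" using D_nz[OF pw] D1_def by simp
  have D2: "D2 \<noteq> 0" using D_nz[OF pv] D2_def by simp
  define \<alpha> where "\<alpha> = cnj \<beta> * of_real D2 / of_real D1"
  have "\<alpha> \<noteq> 0" using b D1 D2 unfolding \<alpha>_def by simp
  moreover have "(\<lambda>z. \<alpha> * z) ` lat w1 w2 \<subseteq> lat v1 v2"
  proof safe
    fix z assume "z \<in> lat w1 w2"
    then obtain m n where z: "z = of_int m * w1 + of_int n * w2" unfolding lat_def by blast
    define y where "y = z / of_real D1"
    have y1: "y \<in> dual1 (lat w1 w2)" using dual_lat_char[OF pw] unfolding y_def z D1_def by blast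
    have "y * cnj \<beta> \<in> dual1 (lat v1 v2)" unfolding dual1_def
    proof safe
      fix l assume "l \<in> lat v1 v2"
      then have "\<beta> * l \<in> lat w1 w2" by (rule sub)
      then have "Im (y * cnj (\<beta> * l)) \<in> \<int>" using y1 unfolding dual1_def by blast
      then show "Im (y * cnj \<beta> * cnj l) \<in> \<int>" by (simp add: mult.assoc)
    qed
    then obtain r s where rs: "y * cnj \<beta> = (of_int r * v1 + of_int s * v2) / of_real D2"
      using dual_lat_char[OF pv] unfolding D2_def by blast
    have "\<alpha> * z = y * cnj \<beta> * of_real D2"
      unfolding \<alpha>_def y_def using D1 by (simp add: field_simps)
    also have "\<dots> = of_int r * v1 + of_int s * v2" unfolding rs using D2 by simp
    finally show "\<alpha> * z \<in> lat v1 v2" using lat_memI by metis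
  qed
  ultimately show ?thesis unfolding isogenous_lat_def by blast
qed

lemma order_transfer:
  assumes ep: "exact_order (lat w1 w2) d p" and eq: "exact_order (lat v1 v2) d q" and dpos: "d > 0"
    and kq: "of_int k * q \<in> lat v1 v2"
  shows "of_int k * p \<in> lat w1 w2"
proof -
  define r where "r = k mod int d"
  define t where "t = k div int d"
  have kdec: "k = int d * t + r" unfolding r_def t_def by simp
  have r0: "0 \<le> r" "r < int d" unfolding r_def using dpos by simp_all
  have dq: "of_nat d * q \<in> lat v1 v2" using eq unfolding exact_order_def by blast
  have dp: "of_nat d * p \<in> lat w1 w2" using ep unfolding exact_order_def by blast
  have "of_int r * q = of_int k * q - of_int t * (of_nat d * q)"
    unfolding kdec by (simp add: algebra_simps)
  also have "\<dots> \<in> lat v1 v2" by (rule lat_diff[OF kq lat_intmul[OF dq]])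
  finally have rq: "of_int r * q \<in> lat v1 v2" .
  have "r = 0"
  proof (rule ccontr)
    assume "r \<noteq> 0"
    then have "0 < nat r" "nat r < d" using r0 by auto
    then have "of_nat (nat r) * q \<notin> lat v1 v2" using eq unfolding exact_order_def by blast
    moreover have "of_nat (nat r) = (of_int r :: complex)" using r0 by simp
    ultimately show False using rq by simp
  qed
  then have "of_int k * p = of_int t * (of_nat d * p)" using kdec by (simp add: algebra_simps)
  then show ?thesis using lat_intmul[OF dp, of t] by metis
qed

lemma coprime_coeffs:
  assumes ep: "exact_order (lat w1 w2) d p" and dpos: "d > 0"
    and dp: "of_nat d * p = of_int m * w1 + of_int n * w2"
  shows "\<exists>a b c. a * m + b * n + c * int d = 1"
proof -
  define g where "g = gcd (gcd m n) (int d)"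
  have gpos: "g > 0" unfolding g_def using dpos by simp
  obtain m1 where m1: "m = g * m1" unfolding g_def by (meson dvd_def gcd_dvd1 dvd_trans)
  obtain n1 where n1: "n = g * n1" unfolding g_def by (meson dvd_def gcd_dvd1 gcd_dvd2 dvd_trans)
  obtain d1 where d1: "int d = g * d1" unfolding g_def by (meson dvd_def gcd_dvd2)
  have g1: "g = 1"
  proof (rule ccontr)
    assume "g \<noteq> 1"
    then have g2: "g > 1" using gpos by simp
    have "0 < g * d1" using d1 dpos by simp
    then have d1pos: "d1 > 0" using gpos by (simp add: zero_less_mult_iff)
    have "1 * d1 < g * d1" using g2 d1pos by (rule mult_strict_right_mono)
    then have "int d > d1" using d1 by simp
    then have k: "0 < nat d1" "nat d1 < d" using d1pos by auto
    have "of_int g * (of_int d1 * p) = of_int g * (of_int m1 * w1 + of_int n1 * w2)"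
    proof -
      have "of_int g * (of_int d1 * p) = of_int (int d) * p" unfolding d1 by simp
      also have "\<dots> = of_int m * w1 + of_int n * w2" using dp by simp
      also have "\<dots> = of_int g * (of_int m1 * w1 + of_int n1 * w2)" unfolding m1 n1 by (simp add: algebra_simps)
      finally show ?thesis .
    qed
    then have "of_int d1 * p = of_int m1 * w1 + of_int n1 * w2" using gpos by simp
    then have "of_nat (nat d1) * p \<in> lat w1 w2" using d1pos lat_memI by (metis of_nat_nat less_imp_le)
    then show False using ep k unfolding exact_order_def by blast
  qed
  obtain u v where uv: "u * gcd m n + v * int d = g" using bezout_int unfolding g_def by blast
  obtain u' v' where uv': "u' * m + v' * n = gcd m n" using bezout_int by blast
  have "(u*u') * m + (u*v') * n + v * int d = u * (u' * m + v' * n) + v * int d"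
    by (simp add: algebra_simps)
  also have "\<dots> = 1" unfolding uv' using uv g1 by simp
  finally have "(u*u') * m + (u*v') * n + v * int d = 1" .
  then show ?thesis by blast
qed

lemma dual_quot:
  assumes pw: "period_pair w1 w2" and ep: "exact_order (lat w1 w2) d p" and dpos: "d > 0"
  shows "dual1 (quot_lat (lat w1 w2) p) =
    (\<lambda>z. of_nat d / of_real (Im (w2 * cnj w1)) * z) ` quot_lat (lat w1 w2) p"
proof -
  define D where "D = Im (w2 * cnj w1)"
  have D: "D \<noteq> 0" using D_nz[OF pw] D_def by simp
  define L where "L = lat w1 w2"
  have "of_nat d * p \<in> L" using ep unfolding exact_order_def L_def by blast
  then obtain m n where dp: "of_nat d * p = of_int m * w1 + of_int n * w2" unfolding L_def lat_def by blast
  obtain \<alpha> \<beta> \<gamma> where abg: "\<alpha> * m + \<beta> * n + \<gamma> * int d = 1"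
    using coprime_coeffs[OF ep dpos dp] by blast
  have char: "x \<in> dual1 (quot_lat L p) \<longleftrightarrow> x \<in> dual1 L \<and> Im (x * cnj p) \<in> \<int>" for x
  proof
    assume x: "x \<in> dual1 (quot_lat L p)"
    have "L \<subseteq> quot_lat L p" unfolding quot_lat_def by force
    moreover have "p \<in> quot_lat L p" unfolding quot_lat_def L_def using lat_zero by force
    ultimately show "x \<in> dual1 L \<and> Im (x * cnj p) \<in> \<int>" using x unfolding dual1_def by blast
  next
    assume x: "x \<in> dual1 L \<and> Im (x * cnj p) \<in> \<int>"
    show "x \<in> dual1 (quot_lat L p)" unfolding dual1_def
    proof safe
      fix z assume "z \<in> quot_lat L p"
      then obtain l k where z: "z = l + of_int k * p" "l \<in> L" unfolding quot_lat_def by blast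
      have "Im (x * cnj z) = Im (x * cnj l) + of_int k * Im (x * cnj p)"
        unfolding z by (simp add: algebra_simps)
      moreover have "Im (x * cnj l) \<in> \<int>" using x z(2) unfolding dual1_def by blast
      ultimately show "Im (x * cnj z) \<in> \<int>" using x by simp
    qed
  qed
  have Imdp: "Im (x * cnj (of_nat d * p)) = of_nat d * Im (x * cnj p)" for x
    by (simp add: algebra_simps)
  show ?thesis unfolding D_def[symmetric] L_def[symmetric]
  proof safe
    fix x assume "x \<in> dual1 (quot_lat L p)"
    then have x1: "x \<in> dual1 L" and x2: "Im (x * cnj p) \<in> \<int>" using char by blast+
    obtain r s where x: "x = (of_int r * w1 + of_int s * w2) / of_real D"
      using x1 dual_lat_char[OF pw] unfolding L_def D_def by blast
    obtain t where t: "Im (x * cnj p) = of_int t" using x2 by (metis Ints_cases)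
    have "of_int (m * s - n * r) = Im (x * cnj (of_nat d * p))"
      unfolding dp Im_lin unfolding x D_def Im_c1[OF D[unfolded D_def]] Im_c2[OF D[unfolded D_def]]
      by simp
    also have "\<dots> = of_int (int d * t)" unfolding Imdp t by simp
    finally have mst: "m * s - n * r = int d * t" by linarith
    define k where "k = \<alpha> * r + \<beta> * s"
    define r' where "r' = r * \<gamma> - \<beta> * t"
    define s' where "s' = s * \<gamma> + \<alpha> * t"
    have er: "r = int d * r' + k * m"
    proof -
      have "int d * r' + k * m = r * (\<alpha> * m + \<beta> * n + \<gamma> * int d) + \<beta> * (m * s - n * r - int d * t)"
        unfolding r'_def k_def by (simp add: algebra_simps)
      then show ?thesis using abg mst by simp
    qed
    have es: "s = int d * s' + k * n"
    proof -
      have "int d * s' + k * n = s * (\<alpha> * m + \<beta> * n + \<gamma> * int d) - \<alpha> * (m * s - n * r - int d * t)"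
        unfolding s'_def k_def by (simp add: algebra_simps)
      then show ?thesis using abg mst by simp
    qed
    define z where "z = (of_int r' * w1 + of_int s' * w2) + of_int k * p"
    have zin: "z \<in> quot_lat L p" unfolding z_def quot_lat_def L_def using lat_memI by blast
    have "of_nat d * z = of_int (int d * r' + k * m) * w1 + of_int (int d * s' + k * n) * w2"
    proof -
      have "of_nat d * z = of_nat d * (of_int r' * w1 + of_int s' * w2) + of_int k * (of_nat d * p)"
        unfolding z_def by (simp add: algebra_simps)
      also have "\<dots> = of_int (int d * r' + k * m) * w1 + of_int (int d * s' + k * n) * w2"
        unfolding dp by (simp add: algebra_simps)
      finally show ?thesis .
    qed
    then have "x = of_nat d / of_real D * z" unfolding x er[symmetric] es[symmetric] by simp
    then show "x \<in> (\<lambda>z. of_nat d / of_real D * z) ` quot_lat L p" using zin by blast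
  next
    fix z assume "z \<in> quot_lat L p"
    then obtain l k where z: "z = l + of_int k * p" "l \<in> L" unfolding quot_lat_def by blast
    obtain r' s' where l: "l = of_int r' * w1 + of_int s' * w2" using z(2) unfolding L_def lat_def by blast
    define r where "r = int d * r' + k * m"
    define s where "s = int d * s' + k * n"
    define x where "x = of_nat d / of_real D * z"
    have xe: "x = (of_int r * w1 + of_int s * w2) / of_real D"
    proof -
      have "of_nat d * z = of_nat d * (of_int r' * w1 + of_int s' * w2) + of_int k * (of_nat d * p)"
        unfolding z l by (simp add: algebra_simps)
      also have "\<dots> = of_int r * w1 + of_int s * w2"
        unfolding dp r_def s_def by (simp add: algebra_simps)
      finally show ?thesis unfolding x_def by simp
    qed
    have x1: "x \<in> dual1 L" using dual_lat_char[OF pw] xe unfolding L_def D_def by blast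
    have "of_nat d * Im (x * cnj p) = Im (x * cnj (of_nat d * p))" unfolding Imdp ..
    also have "\<dots> = of_int (m * s - n * r)"
      unfolding dp Im_lin unfolding xe D_def Im_c1[OF D[unfolded D_def]] Im_c2[OF D[unfolded D_def]]
      by simp
    also have "\<dots> = of_nat d * of_int (m * s' - n * r')"
      unfolding r_def s_def by (simp add: algebra_simps)
    finally have "Im (x * cnj p) = of_int (m * s' - n * r')" using dpos by simp
    then have "Im (x * cnj p) \<in> \<int>" by simp
    then have "x \<in> dual1 (quot_lat L p)" using char x1 by blast
    then show "of_nat d / of_real D * z \<in> dual1 (quot_lat L p)" unfolding x_def .
  qed
qed

lemma iso_from_images:
  assumes "a \<noteq> 0" "\<kappa> \<noteq> 0" "(\<lambda>z. a * z) ` A = (\<lambda>z. \<kappa> * z) ` B"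
  shows "iso_lat B A"
proof -
  have "(\<lambda>z. \<kappa> / a * z) ` B = (\<lambda>z. z / a) ` ((\<lambda>z. \<kappa> * z) ` B)"
    by (simp add: image_image)
  also have "\<dots> = (\<lambda>z. z / a) ` ((\<lambda>z. a * z) ` A)" using assms(3) by simp
  also have "\<dots> = A" using assms(1) by (simp add: image_image)
  finally show ?thesis unfolding iso_lat_def using assms(1,2) by (intro exI[of _ "\<kappa> / a"]) simp
qed

lemma inL1: "l \<in> lat w1 w2 \<Longrightarrow> (l, 0) \<in> prod_quot_lat (lat w1 w2) (lat v1 v2) p q"
  unfolding prod_quot_lat_def using lat_zero[of v1 v2]
  by (intro CollectI exI[of _ l] exI[of _ 0] exI[of _ "0::int"]) simp

lemma inL2: "l \<in> lat v1 v2 \<Longrightarrow> (0, l) \<in> prod_quot_lat (lat w1 w2) (lat v1 v2) p q"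
  unfolding prod_quot_lat_def using lat_zero[of w1 w2]
  by (intro CollectI exI[of _ 0] exI[of _ l] exI[of _ "0::int"]) simp

lemma fst0:
  assumes "exact_order (lat w1 w2) d p" "exact_order (lat v1 v2) d q" "d > 0"
    and "(x, 0) \<in> prod_quot_lat (lat w1 w2) (lat v1 v2) p q"
  shows "x \<in> lat w1 w2"
proof -
  obtain l1 l2 k where h: "x = l1 + of_int k * p" "0 = l2 + of_int k * q" "l1 \<in> lat w1 w2" "l2 \<in> lat v1 v2"
    using assms(4) unfolding prod_quot_lat_def by blast
  have "of_int k * q = 0 - l2" using h(2) by (metis add_diff_cancel_left')
  then have "of_int k * q \<in> lat v1 v2" using lat_diff[OF lat_zero h(4)] by simp
  then have "of_int k * p \<in> lat w1 w2" using order_transfer[OF assms(1,2,3)] by blast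
  then show ?thesis using h(1) lat_add[OF h(3)] by simp
qed

lemma snd0:
  assumes "exact_order (lat w1 w2) d p" "exact_order (lat v1 v2) d q" "d > 0"
    and "(0, y) \<in> prod_quot_lat (lat w1 w2) (lat v1 v2) p q"
  shows "y \<in> lat v1 v2"
proof -
  obtain l1 l2 k where h: "0 = l1 + of_int k * p" "y = l2 + of_int k * q" "l1 \<in> lat w1 w2" "l2 \<in> lat v1 v2"
    using assms(4) unfolding prod_quot_lat_def by blast
  have "of_int k * p = 0 - l1" using h(1) by (metis add_diff_cancel_left')
  then have "of_int k * p \<in> lat w1 w2" using lat_diff[OF lat_zero h(3)] by simp
  then have "of_int k * q \<in> lat v1 v2" using order_transfer[OF assms(2,1,3)] by blast
  then show ?thesis using h(2) lat_add[OF h(4)] by simp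
qed

lemma dual_fst:
  "(x, 0) \<in> dual_lat (prod_quot_lat L1 L2 p q) \<longleftrightarrow> x \<in> dual1 (quot_lat L1 p)"
  if "0 \<in> L2"
proof
  assume a: "(x, 0) \<in> dual_lat (prod_quot_lat L1 L2 p q)"
  show "x \<in> dual1 (quot_lat L1 p)" unfolding dual1_def
  proof safe
    fix z assume "z \<in> quot_lat L1 p"
    then obtain l k where z: "z = l + of_int k * p" "l \<in> L1" unfolding quot_lat_def by blast
    have "(z, of_int k * q) \<in> prod_quot_lat L1 L2 p q"
      unfolding prod_quot_lat_def z using z(2) that by force
    then show "Im (x * cnj z) \<in> \<int>" using a unfolding dual_lat_def by fastforce
  qed
next
  assume a: "x \<in> dual1 (quot_lat L1 p)"
  show "(x, 0) \<in> dual_lat (prod_quot_lat L1 L2 p q)" unfolding dual_lat_def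
  proof (safe)
    fix z1 z2 assume "(z1, z2) \<in> prod_quot_lat L1 L2 p q"
    then have "z1 \<in> quot_lat L1 p" unfolding prod_quot_lat_def quot_lat_def by blast
    then show "Im (x * cnj z1 + 0 * cnj z2) \<in> \<int>" using a unfolding dual1_def by simp
  qed
qed

lemma dual_snd:
  "(0, y) \<in> dual_lat (prod_quot_lat L1 L2 p q) \<longleftrightarrow> y \<in> dual1 (quot_lat L2 q)"
  if "0 \<in> L1"
proof
  assume a: "(0, y) \<in> dual_lat (prod_quot_lat L1 L2 p q)"
  show "y \<in> dual1 (quot_lat L2 q)" unfolding dual1_def
  proof safe
    fix z assume "z \<in> quot_lat L2 q"
    then obtain l k where z: "z = l + of_int k * q" "l \<in> L2" unfolding quot_lat_def by blast
    have "(of_int k * p, z) \<in> prod_quot_lat L1 L2 p q"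
      unfolding prod_quot_lat_def z using z(2) that by force
    then show "Im (y * cnj z) \<in> \<int>" using a unfolding dual_lat_def by fastforce
  qed
next
  assume a: "y \<in> dual1 (quot_lat L2 q)"
  show "(0, y) \<in> dual_lat (prod_quot_lat L1 L2 p q)" unfolding dual_lat_def
  proof (safe)
    fix z1 z2 assume "(z1, z2) \<in> prod_quot_lat L1 L2 p q"
    then have "z2 \<in> quot_lat L2 q" unfolding prod_quot_lat_def quot_lat_def by blast
    then show "Im (0 * cnj z1 + y * cnj z2) \<in> \<int>" using a unfolding dual1_def by simp
  qed
qed

lemma dual_comp:
  assumes "(x1, x2) \<in> dual_lat (prod_quot_lat (lat w1 w2) (lat v1 v2) p q)"
  shows "x1 \<in> dual1 (lat w1 w2)" "x2 \<in> dual1 (lat v1 v2)"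
proof -
  show "x1 \<in> dual1 (lat w1 w2)" unfolding dual1_def
  proof safe
    fix z assume "z \<in> lat w1 w2"
    then have "(z, 0) \<in> prod_quot_lat (lat w1 w2) (lat v1 v2) p q" by (rule inL1)
    then show "Im (x1 * cnj z) \<in> \<int>" using assms unfolding dual_lat_def by fastforce
  qed
  show "x2 \<in> dual1 (lat v1 v2)" unfolding dual1_def
  proof safe
    fix z assume "z \<in> lat v1 v2"
    then have "(0, z) \<in> prod_quot_lat (lat w1 w2) (lat v1 v2) p q" by (rule inL2)
    then show "Im (x2 * cnj z) \<in> \<int>" using assms unfolding dual_lat_def by fastforce
  qed
qed

theorem theorem2p5:
  fixes d :: nat and w1 w2 v1 v2 p q :: complex
  assumes "d > 1"
    and "period_pair w1 w2" and "period_pair v1 v2"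
    and "\<not> isogenous_lat (lat w1 w2) (lat v1 v2)"
    and "exact_order (lat w1 w2) d p" and "exact_order (lat v1 v2) d q"
    and "\<not> iso_lat (quot_lat (lat w1 w2) p) (lat w1 w2) \<or>
         \<not> iso_lat (quot_lat (lat v1 v2) q) (lat v1 v2)"
  shows "\<not> iso_tori2 (prod_quot_lat (lat w1 w2) (lat v1 v2) p q)
                     (dual_lat (prod_quot_lat (lat w1 w2) (lat v1 v2) p q))"
proof
  note pw = assms(2) and pv = assms(3) and nisog = assms(4) and ep = assms(5) and eq = assms(6)
  have dpos: "d > 0" using assms(1) by simp
  define L1 where "L1 = lat w1 w2"
  define L2 where "L2 = lat v1 v2"
  define \<Lambda> where "\<Lambda> = prod_quot_lat L1 L2 p q"
  define D1 where "D1 = Im (w2 * cnj w1)"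
  define D2 where "D2 = Im (v2 * cnj v1)"
  have D1: "D1 \<noteq> 0" using D_nz[OF pw] D1_def by simp
  have D2: "D2 \<noteq> 0" using D_nz[OF pv] D2_def by simp
  assume "iso_tori2 (prod_quot_lat (lat w1 w2) (lat v1 v2) p q)
                     (dual_lat (prod_quot_lat (lat w1 w2) (lat v1 v2) p q))"
  then obtain a b c e where det: "a * e - b * c \<noteq> 0"
    and img: "(\<lambda>(z1, z2). (a * z1 + b * z2, c * z1 + e * z2)) ` \<Lambda> = dual_lat \<Lambda>"
    unfolding iso_tori2_def \<Lambda>_def L1_def L2_def by blast
  have Mmem: "(a * z1 + b * z2, c * z1 + e * z2) \<in> dual_lat \<Lambda>" if "(z1, z2) \<in> \<Lambda>" for z1 z2
    using img that by force
  have inA1: "(l, 0) \<in> \<Lambda>" if "l \<in> L1" for l using inL1 that unfolding \<Lambda>_def L1_def L2_def by blast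
  have inA2: "(0, l) \<in> \<Lambda>" if "l \<in> L2" for l using inL2 that unfolding \<Lambda>_def L1_def L2_def by blast
  have c0: "c = 0"
  proof (rule ccontr)
    assume cnz: "c \<noteq> 0"
    have "(\<lambda>z. (c * of_real D2) * z) ` L1 \<subseteq> L2"
    proof safe
      fix l assume l: "l \<in> L1"
      have "(a * l, c * l) \<in> dual_lat \<Lambda>" using Mmem[OF inA1[OF l]] unfolding \<Lambda>_def L1_def L2_def by simp
      then have "c * l \<in> dual1 L2" using dual_comp unfolding \<Lambda>_def L1_def L2_def by blast
      then obtain r s where "c * l = (of_int r * v1 + of_int s * v2) / of_real D2"
        using dual_lat_char[OF pv] unfolding L2_def D2_def by blast
      then have "c * of_real D2 * l = of_int r * v1 + of_int s * v2" using D2 by (simp add: field_simps)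
      then show "c * of_real D2 * l \<in> L2" unfolding L2_def using lat_memI by metis
    qed
    then have "isogenous_lat L1 L2" unfolding isogenous_lat_def using cnz D2 by (intro exI[of _ "c * of_real D2"]) simp
    then show False using nisog unfolding L1_def L2_def by simp
  qed
  have b0: "b = 0"
  proof (rule ccontr)
    assume bnz: "b \<noteq> 0"
    have "b * of_real D1 * l \<in> L1" if l: "l \<in> L2" for l
    proof -
      have "(b * l, e * l) \<in> dual_lat \<Lambda>" using Mmem[OF inA2[OF l]] unfolding \<Lambda>_def L1_def L2_def by simp
      then have "b * l \<in> dual1 L1" using dual_comp unfolding \<Lambda>_def L1_def L2_def by blast
      then obtain r s where "b * l = (of_int r * w1 + of_int s * w2) / of_real D1"
        using dual_lat_char[OF pw] unfolding L1_def D1_def by blast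
      then have "b * of_real D1 * l = of_int r * w1 + of_int s * w2" using D1 by (simp add: field_simps)
      then show "b * of_real D1 * l \<in> L1" unfolding L1_def using lat_memI by metis
    qed
    then have "isogenous_lat L1 L2" unfolding L1_def L2_def
      by (intro isog_sym[OF pw pv, of "b * of_real D1"]) (use bnz D1 in auto)
    then show False using nisog unfolding L1_def L2_def by simp
  qed
  have ae: "a \<noteq> 0" "e \<noteq> 0" using det b0 by auto
  have eqA: "(\<lambda>z. a * z) ` L1 = dual1 (quot_lat L1 p)"
  proof safe
    fix z assume z: "z \<in> L1"
    have "(a * z, 0) \<in> dual_lat \<Lambda>" using Mmem[OF inA1[OF z]] c0 b0 unfolding \<Lambda>_def L1_def L2_def by simp
    then show "a * z \<in> dual1 (quot_lat L1 p)" using dual_fst[OF lat_zero] unfolding \<Lambda>_def L2_def by blast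
  next
    fix y assume y: "y \<in> dual1 (quot_lat L1 p)"
    then have "(y, 0) \<in> dual_lat \<Lambda>" using dual_fst[OF lat_zero] unfolding \<Lambda>_def L2_def by blast
    then obtain z1 z2 where z: "(z1, z2) \<in> \<Lambda>" "(y, 0) = (a * z1 + b * z2, c * z1 + e * z2)"
      using img by force
    then have "z2 = 0" "y = a * z1" using ae c0 b0 by auto
    then have "z1 \<in> L1" using fst0[OF ep eq dpos] z(1) unfolding \<Lambda>_def L1_def L2_def by blast
    then show "y \<in> (\<lambda>z. a * z) ` L1" using \<open>y = a * z1\<close> by blast
  qed
  have eqE: "(\<lambda>z. e * z) ` L2 = dual1 (quot_lat L2 q)"
  proof safe
    fix z assume z: "z \<in> L2"
    have "(0, e * z) \<in> dual_lat \<Lambda>" using Mmem[OF inA2[OF z]] c0 b0 unfolding \<Lambda>_def L1_def L2_def by simp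
    then show "e * z \<in> dual1 (quot_lat L2 q)" using dual_snd[OF lat_zero] unfolding \<Lambda>_def L1_def by blast
  next
    fix y assume y: "y \<in> dual1 (quot_lat L2 q)"
    then have "(0, y) \<in> dual_lat \<Lambda>" using dual_snd[OF lat_zero] unfolding \<Lambda>_def L1_def by blast
    then obtain z1 z2 where z: "(z1, z2) \<in> \<Lambda>" "(0, y) = (a * z1 + b * z2, c * z1 + e * z2)"
      using img by force
    then have "z1 = 0" "y = e * z2" using ae c0 b0 by auto
    then have "z2 \<in> L2" using snd0[OF ep eq dpos] z(1) unfolding \<Lambda>_def L1_def L2_def by blast
    then show "y \<in> (\<lambda>z. e * z) ` L2" using \<open>y = e * z2\<close> by blast
  qed
  have "iso_lat (quot_lat L1 p) L1"
    using iso_from_images[OF ae(1) _ eqA[unfolded dual_quot[OF pw ep dpos, folded L1_def D1_def]]] dpos D1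
    by simp
  moreover have "iso_lat (quot_lat L2 q) L2"
    using iso_from_images[OF ae(2) _ eqE[unfolded dual_quot[OF pv eq dpos, folded L2_def D2_def]]] dpos D2
    by simp
  ultimately show False using assms(7) unfolding L1_def L2_def by blast
qed

end
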